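(* Fix an integer $k\ge 1$. There exists a function $\epsilon=\epsilon(h)$ with $\epsilon(h)\to 0$ as $h\to\infty$ such that for every $h$ and every ray $\rho\in S_k(h)$ one has \[\frac{2-\epsilon(h)}{k+2}\,h\;\le\;|u_\rho|\;\le\;\frac{2}{k}\,h.\]
   Context: A ray is a half-line $\rho=\mathbb{R}_{\ge 0}v\subset\mathbb{R}^2$ with $v\in\mathbb{Z}^2\setminus\{0\}$; $u_\rho$ is its primitive lattice generator. On $\mathbb{Z}^2$ use the norm $|(x,y)|=\max\{|x|,|y|\}$, and $|\rho|=|u_\rho|$. $\Sigma_h$ is the complete fan whose rays are all rays $\rho$ with $|\rho|\le h$ and whose $2$-dimensional cones are spanned by angularly consecutive such rays; every such cone is smooth. For $\rho\in\Sigma_h(1)$, let $\tau,\omega$ be its two neighbors in $\Sigma_h$ (the rays adjacent to $\rho$ in angular order on either side). Removing $\rho$ (blowing down along $\rho$) yields the cone spanned by $\tau,\omega$, whose singularity index $|\det(u_\tau,u_\omega)|$ equals the unique integer $k$ with $u_\tau+u_\omega=k\,u_\rho$. $S_k(h)$ is the set of rays $\rho\in\Sigma_h(1)$ for which this index equals $k$, and $S_{\ge k}(h)$ the set for which it is at least $k$. *)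

theory Defs
  imports Complex_Main
begin

text \<open>Lattice vectors of Z^2 are represented as pairs of integers. A ray is identified
with its primitive lattice generator (a primitive vector), so rays are in bijection
with primitive vectors.\<close>

definition primitive :: "int \<times> int \<Rightarrow> bool" where
  "primitive v \<longleftrightarrow> gcd (fst v) (snd v) = 1"

definition maxnorm :: "int \<times> int \<Rightarrow> int" where
  "maxnorm v = max \<bar>fst v\<bar> \<bar>snd v\<bar>"

definition det2 :: "int \<times> int \<Rightarrow> int \<times> int \<Rightarrow> int" where
  "det2 a b = fst a * snd b - snd a * fst b"

definition rays :: "nat \<Rightarrow> (int \<times> int) set" where
  "rays h = {v. primitive v \<and> maxnorm v \<le> int h}"

text \<open>b is the angularly next ray after a (counterclockwise) in Sigma_h: b lies strictly
counterclockwise from a within a half-turn, and no ray of Sigma_h lies strictly between them.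
(For h \<ge> 1 consecutive rays are less than a half-turn apart, since the four coordinate
rays belong to Sigma_h.)\<close>
definition ccw_next :: "nat \<Rightarrow> int \<times> int \<Rightarrow> int \<times> int \<Rightarrow> bool" where
  "ccw_next h a b \<longleftrightarrow> a \<in> rays h \<and> b \<in> rays h \<and> det2 a b > 0 \<and>
     \<not> (\<exists>c \<in> rays h. det2 a c > 0 \<and> det2 c b > 0)"

definition S :: "nat \<Rightarrow> nat \<Rightarrow> (int \<times> int) set" where
  "S k h = {u \<in> rays h. \<exists>t w. ccw_next h t u \<and> ccw_next h u w \<and> \<bar>det2 t w\<bar> = int k}"

end

theory Submission
  imports Defs
begin

lemma core:
  fixes tx ty ux uy wx wy h :: int
  assumes d1: "tx*uy - ty*ux = 1" and d2: "ux*wy - uy*wx = 1"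
  and bt1: "\<bar>tx\<bar> \<le> h" and bt2: "\<bar>ty\<bar> \<le> h" and bw1: "\<bar>wx\<bar> \<le> h" and bw2: "\<bar>wy\<bar> \<le> h"
  and a: "h+1 \<le> \<bar>tx+ux\<bar> \<or> h+1 \<le> \<bar>ty+uy\<bar>"
  and b: "h+1 \<le> \<bar>ux+wx\<bar> \<or> h+1 \<le> \<bar>uy+wy\<bar>"
  and o1: "0 \<le> uy" and o2: "uy \<le> ux" and o3: "1 \<le> ux" and o4: "ux \<le> h"
  shows "2*h \<le> (\<bar>tx*wy - ty*wx\<bar> + 2) * ux"
proof -
  have e1: "(tx+ux)*uy = 1 + (ty+uy)*ux" using d1 by (simp add: algebra_simps)
  have e2: "uy*(ux+wx) = ux*(uy+wy) - 1" using d2 by (simp add: algebra_simps)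
  have ax: "tx+ux \<ge> h+1"
  proof (rule ccontr)
    assume n: "\<not> tx+ux \<ge> h+1"
    have "h+1 \<le> ty+uy"
      using a n bt1 bt2 o1 o3 by (auto simp: abs_if split: if_splits)
    then have "(h+1)*ux \<le> (ty+uy)*ux" using o3 by (intro mult_right_mono) auto
    moreover have "(tx+ux)*uy \<le> h*uy" using n o1 by (intro mult_right_mono) auto
    moreover have "h*uy \<le> h*ux" using o2 o3 o4 by (intro mult_left_mono) auto
    ultimately show False using e1 o3 by (simp add: algebra_simps)
  qed
  have bx: "ux+wx \<ge> h"
  proof (rule ccontr)
    assume n: "\<not> ux+wx \<ge> h"
    have "h+1 \<le> uy+wy"
      using b n bw1 bw2 o1 o3 by (auto simp: abs_if split: if_splits)
    then have "(h+1)*ux \<le> (uy+wy)*ux" using o3 by (intro mult_right_mono) auto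
    moreover have "uy*(ux+wx) \<le> uy*(h-1)" using n o1 by (intro mult_left_mono) auto
    moreover have "uy*(h-1) \<le> ux*(h-1)" using o2 o3 o4 by (intro mult_right_mono) auto
    ultimately show False using e2 o3 by (simp add: algebra_simps)
  qed
  have id: "tx + wx = (tx*wy - ty*wx)*ux"
  proof -
    have "tx*(ux*wy-uy*wx) + wx*(tx*uy-ty*ux) = (tx*wy-ty*wx)*ux" by (simp add: algebra_simps)
    then show ?thesis using d1 d2 by simp
  qed
  define k where "k = tx*wy - ty*wx"
  have main: "(k+2)*ux \<ge> 2*h+1" using ax bx id unfolding k_def by (simp add: algebra_simps)
  have "k \<ge> 0"
  proof (rule ccontr)
    assume "\<not> k \<ge> 0"
    then have "(k+2)*ux \<le> 1*ux" using o3 by (intro mult_right_mono) auto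
    then show False using main o4 o3 by linarith
  qed
  then show ?thesis using main unfolding k_def by simp
qed


lemma gcd_dvd_det:
  fixes a b x y :: int
  assumes "a*y - b*x = 1"
  shows "gcd x y = 1"
proof -
  have "gcd x y dvd a*y - b*x" by (simp add: dvd_diff)
  then have "gcd x y dvd 1" using assms by simp
  then show ?thesis by simp
qed

lemma det_one:
  assumes "ccw_next h t u"
  shows "det2 t u = 1"
proof (rule ccontr)
  assume ne: "det2 t u \<noteq> 1"
  obtain a b where t: "t = (a,b)" by (cases t)
  obtain ux uy where u: "u = (ux,uy)" by (cases u)
  define d where "d = det2 t u"
  have tr: "t \<in> rays h" and ur: "u \<in> rays h" and dpos: "d > 0"
    and nob: "\<not> (\<exists>c \<in> rays h. det2 t c > 0 \<and> det2 c u > 0)"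
    using assms unfolding ccw_next_def d_def by auto
  have d2: "d \<ge> 2" using ne dpos d_def by auto
  have d_eq: "d = a*uy - b*ux" unfolding d_def t u det2_def by simp
  have gt: "gcd a b = 1" using tr t by (simp add: rays_def primitive_def)
  have gu: "gcd ux uy = 1" using ur u by (simp add: rays_def primitive_def)
  have ba: "\<bar>a\<bar> \<le> int h" "\<bar>b\<bar> \<le> int h" using tr t by (auto simp: rays_def maxnorm_def)
  have bu: "\<bar>ux\<bar> \<le> int h" "\<bar>uy\<bar> \<le> int h" using ur u by (auto simp: rays_def maxnorm_def)
  obtain m n where mn: "m*a + n*b = 1" using bezout_int[of a b] gt by auto
  define D where "D = (-n)*uy - m*ux"
  define j where "j = - (D div d)"
  define cx where "cx = -n + j*a"
  define cy where "cy = m + j*b"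
  define r where "r = D mod d"
  have dtc: "a*cy - b*cx = 1" unfolding cx_def cy_def using mn by (simp add: algebra_simps)
  have dcu: "cx*uy - cy*ux = r"
  proof -
    have "cx*uy - cy*ux = D + j*d" unfolding cx_def cy_def D_def d_eq by (simp add: algebra_simps)
    also have "\<dots> = r" unfolding j_def r_def by (simp add: algebra_simps minus_div_mult_eq_mod)
    finally show ?thesis .
  qed
  have idx: "d*cx = r*a + ux"
  proof -
    have "(a*uy - b*ux)*cx = (cx*uy - cy*ux)*a + (a*cy - b*cx)*ux" by (simp add: algebra_simps)
    then show ?thesis using dtc dcu d_eq by simp
  qed
  have idy: "d*cy = r*b + uy"
  proof -
    have "(a*uy - b*ux)*cy = (cx*uy - cy*ux)*b + (a*cy - b*cx)*uy" by (simp add: algebra_simps)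
    then show ?thesis using dtc dcu d_eq by simp
  qed
  have r0: "r \<ge> 0" and r1: "r < d" unfolding r_def using dpos by auto
  have rne: "r \<noteq> 0"
  proof
    assume "r = 0"
    then have "d dvd ux" "d dvd uy" using idx idy by auto
    then have "d dvd gcd ux uy" by simp
    then show False using gu d2 by (simp add: zdvd_imp_le)
  qed
  have "\<bar>d*cx\<bar> \<le> r*\<bar>a\<bar> + \<bar>ux\<bar>" using idx r0 abs_triangle_ineq[of "r*a" ux] by (simp add: abs_mult)
  also have "\<dots> \<le> r*h + h" using ba bu r0 by (intro add_mono mult_left_mono) auto
  also have "\<dots> \<le> d*h" using r1 by (metis add.commute distrib_right mult.left_neutral mult_right_mono of_nat_0_le_iff zless_imp_add1_zle)
  finally have "d*\<bar>cx\<bar> \<le> d*h" using dpos by (simp add: abs_mult)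
  then have bcx: "\<bar>cx\<bar> \<le> h" using dpos by simp
  have "\<bar>d*cy\<bar> \<le> r*\<bar>b\<bar> + \<bar>uy\<bar>" using idy r0 abs_triangle_ineq[of "r*b" uy] by (simp add: abs_mult)
  also have "\<dots> \<le> r*h + h" using ba bu r0 by (intro add_mono mult_left_mono) auto
  also have "\<dots> \<le> d*h" using r1 by (metis add.commute distrib_right mult.left_neutral mult_right_mono of_nat_0_le_iff zless_imp_add1_zle)
  finally have "d*\<bar>cy\<bar> \<le> d*h" using dpos by (simp add: abs_mult)
  then have bcy: "\<bar>cy\<bar> \<le> h" using dpos by simp
  have "(cx,cy) \<in> rays h" using bcx bcy gcd_dvd_det[OF dtc]
    by (simp add: rays_def primitive_def maxnorm_def)
  moreover have "det2 t (cx,cy) > 0" "det2 (cx,cy) u > 0" using dtc dcu r0 rne t u by (auto simp: det2_def)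
  ultimately show False using nob by blast
qed


lemma abs_helpers:
  fixes a b :: int
  shows "\<bar>- a - b\<bar> = \<bar>a + b\<bar>" "\<bar>b - a\<bar> = \<bar>a - b\<bar>"
  by auto

lemma core_all:
  fixes tx ty ux uy wx wy h :: int
  assumes d1: "tx*uy - ty*ux = 1" and d2: "ux*wy - uy*wx = 1"
  and bt1: "\<bar>tx\<bar> \<le> h" and bt2: "\<bar>ty\<bar> \<le> h" and bw1: "\<bar>wx\<bar> \<le> h" and bw2: "\<bar>wy\<bar> \<le> h"
  and bu1: "\<bar>ux\<bar> \<le> h" and bu2: "\<bar>uy\<bar> \<le> h"
  and a: "h+1 \<le> \<bar>tx+ux\<bar> \<or> h+1 \<le> \<bar>ty+uy\<bar>"
  and b: "h+1 \<le> \<bar>ux+wx\<bar> \<or> h+1 \<le> \<bar>uy+wy\<bar>"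
  and nz: "ux \<noteq> 0 \<or> uy \<noteq> 0"
  shows "2*h \<le> (\<bar>tx*wy - ty*wx\<bar> + 2) * max \<bar>ux\<bar> \<bar>uy\<bar>"
proof -
  consider "0 \<le> uy \<and> uy \<le> ux" | "0 \<le> ux \<and> ux \<le> -uy" | "0 \<le> -uy \<and> -uy \<le> -ux" | "0 \<le> -ux \<and> -ux \<le> uy"
    | "0 \<le> ux \<and> ux \<le> uy" | "0 \<le> uy \<and> uy \<le> -ux" | "0 \<le> -uy \<and> -uy \<le> ux" | "0 \<le> -ux \<and> -ux \<le> -uy"
    by linarith
  then show ?thesis
  proof cases
    case 1
    have c: "2*h \<le> (\<bar>tx*wy - ty*wx\<bar> + 2) * ux"
      using assms 1 by (intro core[where tx="tx" and ty="ty" and ux="ux" and uy="uy" and wx="wx" and wy="wy" and h=h]) (auto simp: algebra_simps abs_helpers)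
    moreover have "\<bar>tx*wy - ty*wx\<bar> = \<bar>tx*wy - ty*wx\<bar>" by (simp add: algebra_simps abs_helpers)
    moreover have "max \<bar>ux\<bar> \<bar>uy\<bar> = ux" using 1 by auto
    ultimately show ?thesis by simp
  next
    case 2
    have c: "2*h \<le> (\<bar>(-ty)*wx - tx*(-wy)\<bar> + 2) * (-uy)"
      using assms 2 by (intro core[where tx="(-ty)" and ty="tx" and ux="(-uy)" and uy="ux" and wx="(-wy)" and wy="wx" and h=h]) (auto simp: algebra_simps abs_helpers)
    moreover have "\<bar>(-ty)*wx - tx*(-wy)\<bar> = \<bar>tx*wy - ty*wx\<bar>" by (simp add: algebra_simps abs_helpers)
    moreover have "max \<bar>ux\<bar> \<bar>uy\<bar> = (-uy)" using 2 by auto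
    ultimately show ?thesis by simp
  next
    case 3
    have c: "2*h \<le> (\<bar>(-tx)*(-wy) - (-ty)*(-wx)\<bar> + 2) * (-ux)"
      using assms 3 by (intro core[where tx="(-tx)" and ty="(-ty)" and ux="(-ux)" and uy="(-uy)" and wx="(-wx)" and wy="(-wy)" and h=h]) (auto simp: algebra_simps abs_helpers)
    moreover have "\<bar>(-tx)*(-wy) - (-ty)*(-wx)\<bar> = \<bar>tx*wy - ty*wx\<bar>" by (simp add: algebra_simps abs_helpers)
    moreover have "max \<bar>ux\<bar> \<bar>uy\<bar> = (-ux)" using 3 by auto
    ultimately show ?thesis by simp
  next
    case 4
    have c: "2*h \<le> (\<bar>ty*(-wx) - (-tx)*wy\<bar> + 2) * uy"
      using assms 4 by (intro core[where tx="ty" and ty="(-tx)" and ux="uy" and uy="(-ux)" and wx="wy" and wy="(-wx)" and h=h]) (auto simp: algebra_simps abs_helpers)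
    moreover have "\<bar>ty*(-wx) - (-tx)*wy\<bar> = \<bar>tx*wy - ty*wx\<bar>" by (simp add: algebra_simps abs_helpers)
    moreover have "max \<bar>ux\<bar> \<bar>uy\<bar> = uy" using 4 by auto
    ultimately show ?thesis by simp
  next
    case 5
    have c: "2*h \<le> (\<bar>wy*tx - wx*ty\<bar> + 2) * uy"
      using assms 5 by (intro core[where tx="wy" and ty="wx" and ux="uy" and uy="ux" and wx="ty" and wy="tx" and h=h]) (auto simp: algebra_simps abs_helpers)
    moreover have "\<bar>wy*tx - wx*ty\<bar> = \<bar>tx*wy - ty*wx\<bar>" by (simp add: algebra_simps abs_helpers)
    moreover have "max \<bar>ux\<bar> \<bar>uy\<bar> = uy" using 5 by auto
    ultimately show ?thesis by simp
  next
    case 6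
    have c: "2*h \<le> (\<bar>(-wx)*ty - wy*(-tx)\<bar> + 2) * (-ux)"
      using assms 6 by (intro core[where tx="(-wx)" and ty="wy" and ux="(-ux)" and uy="uy" and wx="(-tx)" and wy="ty" and h=h]) (auto simp: algebra_simps abs_helpers)
    moreover have "\<bar>(-wx)*ty - wy*(-tx)\<bar> = \<bar>tx*wy - ty*wx\<bar>" by (simp add: algebra_simps abs_helpers)
    moreover have "max \<bar>ux\<bar> \<bar>uy\<bar> = (-ux)" using 6 by auto
    ultimately show ?thesis by simp
  next
    case 7
    have c: "2*h \<le> (\<bar>wx*(-ty) - (-wy)*tx\<bar> + 2) * ux"
      using assms 7 by (intro core[where tx="wx" and ty="(-wy)" and ux="ux" and uy="(-uy)" and wx="tx" and wy="(-ty)" and h=h]) (auto simp: algebra_simps abs_helpers)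
    moreover have "\<bar>wx*(-ty) - (-wy)*tx\<bar> = \<bar>tx*wy - ty*wx\<bar>" by (simp add: algebra_simps abs_helpers)
    moreover have "max \<bar>ux\<bar> \<bar>uy\<bar> = ux" using 7 by auto
    ultimately show ?thesis by simp
  next
    case 8
    have c: "2*h \<le> (\<bar>(-wy)*(-tx) - (-wx)*(-ty)\<bar> + 2) * (-uy)"
      using assms 8 by (intro core[where tx="(-wy)" and ty="(-wx)" and ux="(-uy)" and uy="(-ux)" and wx="(-ty)" and wy="(-tx)" and h=h]) (auto simp: algebra_simps abs_helpers)
    moreover have "\<bar>(-wy)*(-tx) - (-wx)*(-ty)\<bar> = \<bar>tx*wy - ty*wx\<bar>" by (simp add: algebra_simps abs_helpers)
    moreover have "max \<bar>ux\<bar> \<bar>uy\<bar> = (-uy)" using 8 by auto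
    ultimately show ?thesis by simp
  qed
qed


lemma sum_big:
  assumes c: "ccw_next h t u"
  shows "int h < maxnorm (fst t + fst u, snd t + snd u)"
proof (rule ccontr)
  assume n: "\<not> int h < maxnorm (fst t + fst u, snd t + snd u)"
  have d: "det2 t u = 1" using det_one[OF c] .
  obtain tx ty where t: "t = (tx,ty)" by (cases t)
  obtain ux uy where u: "u = (ux,uy)" by (cases u)
  have d': "tx*uy - ty*ux = 1" using d t u by (simp add: det2_def)
  have "gcd (tx+ux) (ty+uy) = 1"
    by (rule gcd_dvd_det[where a="-ux" and b="-uy"]) (use d' in \<open>simp add: algebra_simps\<close>)
  then have "(tx+ux, ty+uy) \<in> rays h" using n t u by (simp add: rays_def primitive_def)
  moreover have "det2 t (tx+ux, ty+uy) > 0" "det2 (tx+ux, ty+uy) u > 0"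
    using d' t u by (simp_all add: det2_def algebra_simps)
  ultimately show False using c unfolding ccw_next_def by blast
qed

theorem proposition4p2:
  fixes k :: nat
  assumes "k \<ge> 1"
  shows "\<exists>\<epsilon> :: nat \<Rightarrow> real. (\<epsilon> \<longlongrightarrow> 0) at_top \<and>
    (\<forall>h. \<forall>u \<in> S k h.
        (2 - \<epsilon> h) / (real k + 2) * real h \<le> real_of_int (maxnorm u) \<and>
        real_of_int (maxnorm u) \<le> 2 / real k * real h)"
proof (rule exI[of _ "\<lambda>_. 0"], rule conjI)
  show "((\<lambda>_. 0::real) \<longlongrightarrow> 0) at_top" by simp
next
  show "\<forall>h. \<forall>u \<in> S k h.
        (2 - 0) / (real k + 2) * real h \<le> real_of_int (maxnorm u) \<and>
        real_of_int (maxnorm u) \<le> 2 / real k * real h"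
  proof (intro allI ballI)
  fix h u assume uS: "u \<in> S k h"
  then obtain t w where ct: "ccw_next h t u" and cw: "ccw_next h u w" and kk: "\<bar>det2 t w\<bar> = int k"
    unfolding S_def by blast
  obtain tx ty where t: "t = (tx,ty)" by (cases t)
  obtain ux uy where u: "u = (ux,uy)" by (cases u)
  obtain wx wy where w: "w = (wx,wy)" by (cases w)
  have d1: "tx*uy - ty*ux = 1" using det_one[OF ct] t u by (simp add: det2_def)
  have d2: "ux*wy - uy*wx = 1" using det_one[OF cw] u w by (simp add: det2_def)
  have tr: "t \<in> rays h" and ur: "u \<in> rays h" and wr: "w \<in> rays h"
    using ct cw unfolding ccw_next_def by auto
  have bt: "\<bar>tx\<bar> \<le> int h" "\<bar>ty\<bar> \<le> int h" using tr t by (auto simp: rays_def maxnorm_def)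
  have bu: "\<bar>ux\<bar> \<le> int h" "\<bar>uy\<bar> \<le> int h" using ur u by (auto simp: rays_def maxnorm_def)
  have bw: "\<bar>wx\<bar> \<le> int h" "\<bar>wy\<bar> \<le> int h" using wr w by (auto simp: rays_def maxnorm_def)
  have nz: "ux \<noteq> 0 \<or> uy \<noteq> 0" using ur u by (auto simp: rays_def primitive_def)
  have a: "int h+1 \<le> \<bar>tx+ux\<bar> \<or> int h+1 \<le> \<bar>ty+uy\<bar>"
    using sum_big[OF ct] t u by (auto simp: maxnorm_def)
  have b: "int h+1 \<le> \<bar>ux+wx\<bar> \<or> int h+1 \<le> \<bar>uy+wy\<bar>"
    using sum_big[OF cw] w u by (auto simp: maxnorm_def)
  have kk': "\<bar>tx*wy - ty*wx\<bar> = int k" using kk t w by (simp add: det2_def)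
  have mu: "maxnorm u = max \<bar>ux\<bar> \<bar>uy\<bar>" using u by (simp add: maxnorm_def)
  have low: "2 * int h \<le> (int k + 2) * maxnorm u"
    using core_all[OF d1 d2 bt bw bu a b nz] kk' mu by simp
  have idx: "tx + wx = (tx*wy - ty*wx)*ux"
  proof -
    have "tx*(ux*wy-uy*wx) + wx*(tx*uy-ty*ux) = (tx*wy-ty*wx)*ux" by (simp add: algebra_simps)
    then show ?thesis using d1 d2 by simp
  qed
  have idy: "ty + wy = (tx*wy - ty*wx)*uy"
  proof -
    have "ty*(ux*wy-uy*wx) + wy*(tx*uy-ty*ux) = (tx*wy-ty*wx)*uy" by (simp add: algebra_simps)
    then show ?thesis using d1 d2 by simp
  qed
  have ux2: "int k * \<bar>ux\<bar> \<le> 2 * int h"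
  proof -
    have "int k * \<bar>ux\<bar> = \<bar>tx + wx\<bar>" using idx kk' by (simp add: abs_mult)
    also have "\<dots> \<le> 2 * int h" using bt bw by linarith
    finally show ?thesis .
  qed
  have uy2: "int k * \<bar>uy\<bar> \<le> 2 * int h"
  proof -
    have "int k * \<bar>uy\<bar> = \<bar>ty + wy\<bar>" using idy kk' by (simp add: abs_mult)
    also have "\<dots> \<le> 2 * int h" using bt bw by linarith
    finally show ?thesis .
  qed
  have up: "int k * maxnorm u \<le> 2 * int h" using ux2 uy2 mu by (simp add: max_def)
  have low': "2 * real h \<le> (real k + 2) * real_of_int (maxnorm u)"
  proof -
    have "real_of_int (2 * int h) \<le> real_of_int ((int k + 2) * maxnorm u)" using low by linarith
    then show ?thesis by simp
  qed
  have up': "real k * real_of_int (maxnorm u) \<le> 2 * real h"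
  proof -
    have "real_of_int (int k * maxnorm u) \<le> real_of_int (2 * int h)" using up by linarith
    then show ?thesis by simp
  qed
  have kp: "real k > 0" using assms by simp
  show "(2 - 0) / (real k + 2) * real h \<le> real_of_int (maxnorm u) \<and>
        real_of_int (maxnorm u) \<le> 2 / real k * real h"
  proof
    show "(2 - 0) / (real k + 2) * real h \<le> real_of_int (maxnorm u)"
      using low' kp by (simp add: field_simps)
    show "real_of_int (maxnorm u) \<le> 2 / real k * real h"
      using up' kp by (simp add: field_simps)
  qed
  qed
qed

end
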